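(* For any ring $R$ (associative with identity), the matrix rings $M_2(R)$ and $M_3(R)$ are 2-clean.
   Context: A ring $S$ is 2-clean if every element of $S$ can be written as $e+u_1+u_2$ with $e=e^2\in S$ and $u_1,u_2$ units of $S$. *)

theory Defs
  imports "HOL-Analysis.Analysis"
begin

text \<open>The ring of n x n matrices over a ring R (type class ring_1: associative,
  with identity, not necessarily commutative) is modelled as the type 'a^'n^'n with
  matrix addition (+), matrix product (**), identity mat 1.
  Units of the matrix ring are the two-sided invertible matrices (library notion invertible).\<close>

definition matrix_ring_2clean :: "'a::ring_1 itself \<Rightarrow> 'n::finite itself \<Rightarrow> bool" where
  "matrix_ring_2clean _ _ \<longleftrightarrow>
     (\<forall>A :: 'a^'n^'n. \<exists>E U1 U2 :: 'a^'n^'n.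
        E ** E = E \<and> invertible U1 \<and> invertible U2 \<and> A = E + U1 + U2)"

end

theory Submission
  imports Defs
begin

definition m3 :: "'a::ring_1 \<Rightarrow> 'a \<Rightarrow> 'a \<Rightarrow> 'a \<Rightarrow> 'a \<Rightarrow> 'a \<Rightarrow> 'a \<Rightarrow> 'a \<Rightarrow> 'a \<Rightarrow> 'a^3^3" where
  "m3 a b c d e f g h i = vector [vector [a,b,c], vector [d,e,f], vector [g,h,i]]"

lemma m3_nth [simp]:
  "m3 a b c d e f g h i $ 1 $ 1 = a" "m3 a b c d e f g h i $ 1 $ 2 = b" "m3 a b c d e f g h i $ 1 $ 3 = c"
  "m3 a b c d e f g h i $ 2 $ 1 = d" "m3 a b c d e f g h i $ 2 $ 2 = e" "m3 a b c d e f g h i $ 2 $ 3 = f"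
  "m3 a b c d e f g h i $ 3 $ 1 = g" "m3 a b c d e f g h i $ 3 $ 2 = h" "m3 a b c d e f g h i $ 3 $ 3 = i"
  by (simp_all add: m3_def)

lemma m3_eq_iff: "(m3 a b c d e f g h i = m3 a' b' c' d' e' f' g' h' i') \<longleftrightarrow>
  a = a' \<and> b = b' \<and> c = c' \<and> d = d' \<and> e = e' \<and> f = f' \<and> g = g' \<and> h = h' \<and> i = i'"
  by (auto simp: vec_eq_iff forall_3)

lemma m3_mult: "m3 a b c d e f g h i ** m3 a' b' c' d' e' f' g' h' i' =
  m3 (a*a'+b*d'+c*g') (a*b'+b*e'+c*h') (a*c'+b*f'+c*i')
     (d*a'+e*d'+f*g') (d*b'+e*e'+f*h') (d*c'+e*f'+f*i')
     (g*a'+h*d'+i*g') (g*b'+h*e'+i*h') (g*c'+h*f'+i*i')"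
  by (simp add: matrix_matrix_mult_def vec_eq_iff forall_3 sum_3)

lemma m3_add: "m3 a b c d e f g h i + m3 a' b' c' d' e' f' g' h' i' =
  m3 (a+a') (b+b') (c+c') (d+d') (e+e') (f+f') (g+g') (h+h') (i+i')"
  by (simp add: vec_eq_iff forall_3)

lemma m3_one: "(mat 1 :: 'a::ring_1^3^3) = m3 1 0 0 0 1 0 0 0 1"
  by (simp add: vec_eq_iff forall_3 mat_def)

lemma m3_of: "(A :: 'a::ring_1^3^3) = m3 (A$1$1) (A$1$2) (A$1$3) (A$2$1) (A$2$2) (A$2$3) (A$3$1) (A$3$2) (A$3$3)"
  by (simp add: vec_eq_iff forall_3)

lemma m3_upper_inv: "invertible (m3 1 p q 0 1 r 0 0 (1::'a::ring_1))"
  unfolding invertible_def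
  by (rule exI[of _ "m3 1 (-p) (p*r-q) 0 1 (-r) 0 0 1"])
     (simp add: m3_mult m3_one m3_eq_iff algebra_simps)

lemma m3_lower_inv: "invertible (m3 1 0 0 l 1 0 m n (1::'a::ring_1))"
  unfolding invertible_def
  by (rule exI[of _ "m3 1 0 0 (-l) 1 0 (n*l-m) (-n) 1"])
     (simp add: m3_mult m3_one m3_eq_iff algebra_simps)

lemma m3_cyc_inv: "invertible (m3 0 0 1 1 0 0 0 1 (0::'a::ring_1))"
  unfolding invertible_def
  by (rule exI[of _ "m3 0 1 0 0 0 1 1 0 0"])
     (simp add: m3_mult m3_one m3_eq_iff algebra_simps)

lemma clean3: "matrix_ring_2clean TYPE('a::ring_1) TYPE(3)"
  unfolding matrix_ring_2clean_def
proof
  fix A :: "'a^3^3"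
  define p where "p = A$1$1 - 2"
  define r where "r = A$2$2 - 1"
  define w where "w = A$3$3 - 1"
  define q where "q = A$1$2"
  define t where "t = A$2$3 - r*w"
  define z where "z = A$1$3 - 1 - p*t - q*w"
  define E where "E = m3 1 0 z 0 0 0 0 0 (0::'a)"
  define U1 where "U1 = m3 1 p q 0 1 r 0 0 1 ** m3 0 0 1 1 0 0 0 1 0 ** m3 1 0 t 0 1 w 0 0 (1::'a)"
  define U2 where "U2 = m3 1 0 0 (A$2$1 - 1) 1 0 (A$3$1) (A$3$2 - 1) (1::'a)"
  have "E ** E = E" unfolding E_def by (simp add: m3_mult)
  moreover have "invertible U1" unfolding U1_def
    by (intro invertible_mult m3_upper_inv m3_cyc_inv)
  moreover have "invertible U2" unfolding U2_def by (rule m3_lower_inv)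
  moreover have "A = E + U1 + U2"
    apply (subst m3_of[of A])
    unfolding E_def U1_def U2_def
    by (simp add: m3_mult m3_add m3_eq_iff p_def r_def w_def q_def t_def z_def algebra_simps)
  ultimately show "\<exists>E U1 U2 :: 'a^3^3. E ** E = E \<and> invertible U1 \<and> invertible U2 \<and> A = E + U1 + U2"
    by blast
qed

definition m2 :: "'a::ring_1 \<Rightarrow> 'a \<Rightarrow> 'a \<Rightarrow> 'a \<Rightarrow> 'a^2^2" where
  "m2 a b c d = vector [vector [a,b], vector [c,d]]"

lemma m2_nth [simp]:
  "m2 a b c d $ 1 $ 1 = a" "m2 a b c d $ 1 $ 2 = b" "m2 a b c d $ 2 $ 1 = c" "m2 a b c d $ 2 $ 2 = d"
  by (simp_all add: m2_def)

lemma m2_eq_iff: "(m2 a b c d = m2 a' b' c' d') \<longleftrightarrow> a = a' \<and> b = b' \<and> c = c' \<and> d = d'"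
  by (auto simp: vec_eq_iff forall_2)

lemma m2_mult: "m2 a b c d ** m2 a' b' c' d' =
  m2 (a*a'+b*c') (a*b'+b*d') (c*a'+d*c') (c*b'+d*d')"
  by (simp add: matrix_matrix_mult_def vec_eq_iff forall_2 sum_2)

lemma m2_add: "m2 a b c d + m2 a' b' c' d' = m2 (a+a') (b+b') (c+c') (d+d')"
  by (simp add: vec_eq_iff forall_2)

lemma m2_one: "(mat 1 :: 'a::ring_1^2^2) = m2 1 0 0 1"
  by (simp add: vec_eq_iff forall_2 mat_def)

lemma m2_of: "(A :: 'a::ring_1^2^2) = m2 (A$1$1) (A$1$2) (A$2$1) (A$2$2)"
  by (simp add: vec_eq_iff forall_2)

lemma m2_upper_inv: "invertible (m2 1 p 0 (1::'a::ring_1))"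
  unfolding invertible_def
  by (rule exI[of _ "m2 1 (-p) 0 1"]) (simp add: m2_mult m2_one m2_eq_iff)

lemma m2_lower_inv: "invertible (m2 1 0 l (1::'a::ring_1))"
  unfolding invertible_def
  by (rule exI[of _ "m2 1 0 (-l) 1"]) (simp add: m2_mult m2_one m2_eq_iff)

lemma m2_swap_inv: "invertible (m2 0 1 1 (0::'a::ring_1))"
  unfolding invertible_def
  by (rule exI[of _ "m2 0 1 1 0"]) (simp add: m2_mult m2_one m2_eq_iff)

lemma clean2: "matrix_ring_2clean TYPE('a::ring_1) TYPE(2)"
  unfolding matrix_ring_2clean_def
proof
  fix A :: "'a^2^2"
  define p where "p = A$1$1 - 2"
  define w where "w = A$2$2 - 1"
  define z where "z = A$1$2 - 1 - p*w"
  define E where "E = m2 1 z 0 (0::'a)"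
  define U1 where "U1 = m2 1 p 0 1 ** m2 0 1 1 0 ** m2 1 w 0 (1::'a)"
  define U2 where "U2 = m2 1 0 (A$2$1 - 1) (1::'a)"
  have "E ** E = E" unfolding E_def by (simp add: m2_mult)
  moreover have "invertible U1" unfolding U1_def
    by (intro invertible_mult m2_upper_inv m2_swap_inv)
  moreover have "invertible U2" unfolding U2_def by (rule m2_lower_inv)
  moreover have "A = E + U1 + U2"
    apply (subst m2_of[of A])
    unfolding E_def U1_def U2_def
    by (simp add: m2_mult m2_add m2_eq_iff p_def w_def z_def algebra_simps)
  ultimately show "\<exists>E U1 U2 :: 'a^2^2. E ** E = E \<and> invertible U1 \<and> invertible U2 \<and> A = E + U1 + U2"
    by blast
qed

theorem lemma3:
  shows "matrix_ring_2clean TYPE('a::ring_1) TYPE(2) \<and> matrix_ring_2clean TYPE('a) TYPE(3)"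
  using clean2 clean3 by blast

end
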